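(* Let $b\ge 3$, let $\mathbb R_b$ be a complete system of residues mod $b$ (possibly containing negative integers), and let $D\subset\mathbb R_b$ with $2\le|D|<b$. Suppose $S\subset\mathbb R_b$ is a set of integers with $|S|>1$ and $S-S=\{s-s':s,s'\in S\}\subseteq D$. Then $\mathcal C=\mathcal C_{b,D}$ is van der Corput with power savings of order $c=\frac{\log|S|}{\log b}$, i.e. $T(\mathcal C,N)\ll N^{-c}$; in particular $I(\mathcal C,N)\ll N^{-c}$, i.e. every $A\subset[N]$ with $(A-A)\cap\mathcal C=\emptyset$ satisfies $|A|\ll N^{1-c}$.
   Context: $\mathcal C_{b,D}=\{\sum_{j=0}^{k} d_j b^j : k\in\mathbb N_0,\ d_j\in D\}$. $[N]=\{1,\dots,N\}$. For $H\subset\mathbb Z$: $I(H,N)=\max\{|A|/N: A\subset[N],\ (A-A)\cap H=\emptyset\}$ (differences $a-a'$ with $a\neq a'$); $T(H,N)=\inf a_0$ over all real trigonometric polynomials $T(x)=a_0+\sum_{n<N,\,n\in H} a_n\cos(2\pi n x)$ with $T(0)=1$ and $T(x)\ge 0$ for all $x$. $H$ has power savings of order $c$ in the van der Corput property if $T(H,N)\ll N^{-c}$, and in the intersective property if $I(H,N)\ll N^{-c}$. *)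

theory Defs
  imports Complex_Main
begin

definition complete_residue_system :: "nat \<Rightarrow> int set \<Rightarrow> bool" where
  "complete_residue_system b R \<longleftrightarrow>
     finite R \<and> card R = b \<and> (\<lambda>x. x mod int b) ` R = {0..<int b}"

definition digit_set :: "nat \<Rightarrow> int set \<Rightarrow> int set" where
  "digit_set b D = {(\<Sum>j\<le>k. d j * int b ^ j) | k d. \<forall>j\<le>k. d j \<in> D}"

definition inter_density :: "int set \<Rightarrow> nat \<Rightarrow> real" where
  "inter_density H N = Max ((\<lambda>A. real (card A) / real N) `
      {A. A \<subseteq> {1..int N} \<and> (\<forall>a\<in>A. \<forall>a'\<in>A. a \<noteq> a' \<longrightarrow> a - a' \<notin> H)})"

definition trig_val :: "nat \<Rightarrow> real \<Rightarrow> (int \<Rightarrow> real) \<Rightarrow> real \<Rightarrow> real" where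
  "trig_val N a0 a x = a0 + (\<Sum>n\<in>{-(int N)<..<int N}. a n * cos (2 * pi * real_of_int n * x))"

definition vdc_T :: "int set \<Rightarrow> nat \<Rightarrow> real" where
  "vdc_T H N = Inf {a0. \<exists>a :: int \<Rightarrow> real.
      (\<forall>n. a n \<noteq> 0 \<longrightarrow> n \<in> H \<and> n \<noteq> 0 \<and> \<bar>n\<bar> < int N) \<and>
      trig_val N a0 a 0 = 1 \<and> (\<forall>x. trig_val N a0 a x \<ge> 0)}"

end

theory Submission
  imports Defs "HOL-Library.FuncSet"
begin


lemma cos_sum_zero:
  fixes n :: int and N :: nat
  assumes "0 < \<bar>n\<bar>" "\<bar>n\<bar> < int N"
  shows "(\<Sum>j<N. cos (2 * pi * real_of_int n * (real j / real N))) = 0"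
proof -
  define t where "t = 2 * pi * real_of_int n / real N"
  have N0: "real N > 0" using assms by simp
  have eq: "\<And>j. 2 * pi * real_of_int n * (real j / real N) = real j * t"
    unfolding t_def by simp
  define f where "f j = sin (real j * t - t/2)" for j :: nat
  have step: "2 * sin (t/2) * cos (real j * t) = f (Suc j) - f j" for j
  proof -
    have "f (Suc j) = sin (real j * t + t/2)" unfolding f_def by (simp add: algebra_simps)
    moreover have "f j = sin (real j * t - t/2)" unfolding f_def by simp
    ultimately show ?thesis by (simp add: sin_add sin_diff)
  qed
  have "2 * sin (t/2) * (\<Sum>j<N. cos (real j * t)) = (\<Sum>j<N. f (Suc j) - f j)"
    by (simp add: sum_distrib_left step[symmetric] mult.assoc)
  also have "\<dots> = f N - f 0" by (rule sum_lessThan_telescope)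
  also have "f N = sin (- (t/2) + 2 * pi * real_of_int n)"
    unfolding f_def t_def using N0 by (simp add: algebra_simps)
  also have "\<dots> = sin (- (t/2))"
  proof -
    have "sin (2 * pi * real_of_int n) = 0" "cos (2 * pi * real_of_int n) = 1"
      using sin_int_2pin[of n] cos_int_2pin[of n] by auto
    then show ?thesis by (simp only: sin_add)
  qed
  also have "f 0 = sin (- (t/2))" unfolding f_def by simp
  finally have A: "2 * sin (t/2) * (\<Sum>j<N. cos (real j * t)) = 0" by simp
  have "sin (t/2) \<noteq> 0"
  proof
    assume "sin (t/2) = 0"
    then obtain i :: int where i: "t/2 = of_int i * pi" by (auto simp: sin_zero_iff_int2)
    then have "real_of_int n = of_int i * real N" unfolding t_def using N0 by (simp add: field_simps)
    then have "n = i * int N" by (metis of_int_eq_iff of_int_mult of_int_of_nat_eq)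
    with assms show False
      by (cases "i = 0") (auto simp: abs_mult, smt (verit) mult_le_cancel_right1 of_nat_0_le_iff)
  qed
  with A have "(\<Sum>j<N. cos (real j * t)) = 0" by simp
  then show ?thesis by (simp only: eq)
qed

lemma adm_nonneg:
  assumes N: "N \<ge> 1" and sup: "\<forall>n. a n \<noteq> 0 \<longrightarrow> n \<noteq> 0 \<and> \<bar>n\<bar> < int N"
    and pos: "\<forall>x. trig_val N a0 a x \<ge> 0"
  shows "a0 \<ge> 0"
proof -
  let ?I = "{-(int N)<..<int N}"
  have "0 \<le> (\<Sum>j<N. trig_val N a0 a (real j / real N))"
    using pos by (intro sum_nonneg) auto
  also have "\<dots> = real N * a0 + (\<Sum>n\<in>?I. a n * (\<Sum>j<N. cos (2 * pi * real_of_int n * (real j / real N))))"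
    unfolding trig_val_def by (simp add: sum.distrib sum_distrib_left sum.swap[of _ "{..<N}"])
  also have "(\<Sum>n\<in>?I. a n * (\<Sum>j<N. cos (2 * pi * real_of_int n * (real j / real N)))) = 0"
  proof (intro sum.neutral ballI)
    fix n assume "n \<in> ?I"
    show "a n * (\<Sum>j<N. cos (2 * pi * real_of_int n * (real j / real N))) = 0"
    proof (cases "a n = 0")
      case False
      with sup have "n \<noteq> 0" "\<bar>n\<bar> < int N" by auto
      then have "(\<Sum>j<N. cos (2 * pi * real_of_int n * (real j / real N))) = 0"
        by (intro cos_sum_zero) auto
      then show ?thesis by simp
    qed simp
  qed
  finally show ?thesis using N by (simp add: zero_le_mult_iff)
qed

lemma vdc_generic:
  fixes F :: "'a set" and phi :: "'a \<Rightarrow> int" and H :: "int set" and N :: nat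
  assumes fin: "finite F" and ne: "F \<noteq> {}" and inj: "inj_on phi F" and N: "N \<ge> 1"
    and diffH: "\<forall>s\<in>F. \<forall>t\<in>F. phi s \<noteq> phi t \<longrightarrow> phi s - phi t \<in> H"
    and small: "\<forall>s\<in>F. \<forall>t\<in>F. \<bar>phi s - phi t\<bar> < int N"
  shows "vdc_T H N \<le> 1 / real (card F)"
proof -
  define m where "m = real (card F)"
  have m0: "m > 0" using fin ne unfolding m_def by (simp add: card_gt_0_iff)
  define Q where "Q = F \<times> F"
  define dl where "dl p = phi (fst p) - phi (snd p)" for p
  define I where "I = {-(int N)<..<int N}"
  define c where "c n = real (card {p\<in>Q. dl p = n}) / m^2" for n
  define a where "a n = (if n = 0 then 0 else c n)" for n
  have finQ: "finite Q" using fin unfolding Q_def by simp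
  have "{p\<in>Q. dl p = 0} = (\<lambda>s. (s,s)) ` F"
    using inj unfolding Q_def dl_def by (auto simp: inj_on_eq_iff)
  then have "card {p\<in>Q. dl p = 0} = card F" by (simp add: card_image inj_on_def)
  then have c0: "c 0 = 1 / m" unfolding c_def m_def by (simp add: power2_eq_square)
  have dlI: "dl ` Q \<subseteq> I" using small unfolding Q_def dl_def I_def by (fastforce simp: abs_less_iff)
  have keysum: "(\<Sum>n\<in>I. c n * g n) = (\<Sum>p\<in>Q. g (dl p)) / m^2" for g :: "int \<Rightarrow> real"
  proof -
    have "(\<Sum>p\<in>Q. g (dl p)) = (\<Sum>n\<in>dl ` Q. \<Sum>p\<in>{p\<in>Q. dl p = n}. g (dl p))"
      by (rule sum.image_gen[OF finQ])
    also have "\<dots> = (\<Sum>n\<in>dl ` Q. real (card {p\<in>Q. dl p = n}) * g n)"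
      by (intro sum.cong refl) simp
    also have "\<dots> = (\<Sum>n\<in>I. real (card {p\<in>Q. dl p = n}) * g n)"
    proof (rule sum.mono_neutral_left)
      show "finite I" unfolding I_def by simp
      show "dl ` Q \<subseteq> I" by (rule dlI)
      show "\<forall>i\<in>I - dl ` Q. real (card {p \<in> Q. dl p = i}) * g i = 0"
      proof
        fix i assume "i \<in> I - dl ` Q"
        then have "{p \<in> Q. dl p = i} = {}" by auto
        then show "real (card {p \<in> Q. dl p = i}) * g i = 0" by (simp only: card.empty of_nat_0 mult_zero_left)
      qed
    qed
    finally show ?thesis unfolding c_def using m0 by (simp add: sum_divide_distrib)
  qed
  have I0: "0 \<in> I" using N unfolding I_def by simp
  have finI: "finite I" unfolding I_def by simp
  have trig: "trig_val N (c 0) a x = (\<Sum>n\<in>I. c n * cos (2 * pi * real_of_int n * x))" for x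
  proof -
    have "(\<Sum>n\<in>I. c n * cos (2 * pi * real_of_int n * x)) = c 0 + (\<Sum>n\<in>I-{0}. c n * cos (2 * pi * real_of_int n * x))"
      by (simp add: sum.remove[OF finI I0])
    moreover have "(\<Sum>n\<in>I. a n * cos (2 * pi * real_of_int n * x)) = (\<Sum>n\<in>I-{0}. c n * cos (2 * pi * real_of_int n * x))"
      by (simp add: sum.remove[OF finI I0] a_def)
    ultimately show ?thesis unfolding trig_val_def I_def by simp
  qed
  have posQ: "(\<Sum>p\<in>Q. cos (2 * pi * real_of_int (dl p) * x)) \<ge> 0" for x
  proof -
    define u where "u s = 2 * pi * real_of_int (phi s) * x" for s
    have "(\<Sum>p\<in>Q. cos (2 * pi * real_of_int (dl p) * x)) = (\<Sum>s\<in>F. \<Sum>t\<in>F. cos (u s - u t))"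
      unfolding Q_def sum.cartesian_product dl_def u_def
      by (intro sum.cong refl) (simp add: algebra_simps split_def)
    also have "\<dots> = (\<Sum>s\<in>F. cos (u s)) * (\<Sum>t\<in>F. cos (u t)) + (\<Sum>s\<in>F. sin (u s)) * (\<Sum>t\<in>F. sin (u t))"
      by (simp add: cos_diff sum.distrib sum_product)
    also have "\<dots> \<ge> 0" by simp
    finally show ?thesis .
  qed
  have adm: "c 0 \<in> {a0. \<exists>a :: int \<Rightarrow> real.
      (\<forall>n. a n \<noteq> 0 \<longrightarrow> n \<in> H \<and> n \<noteq> 0 \<and> \<bar>n\<bar> < int N) \<and>
      trig_val N a0 a 0 = 1 \<and> (\<forall>x. trig_val N a0 a x \<ge> 0)}"
  proof (intro CollectI exI conjI allI impI)
    fix n assume an: "a n \<noteq> 0"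
    then have n0: "n \<noteq> 0" and "c n \<noteq> 0" unfolding a_def by (auto split: if_splits)
    then have "card {p\<in>Q. dl p = n} \<noteq> 0" unfolding c_def by auto
    then have "{p\<in>Q. dl p = n} \<noteq> {}" by (metis card.empty)
    then obtain s t where st: "s \<in> F" "t \<in> F" "dl (s,t) = n" unfolding Q_def by auto
    then show "n \<in> H" using diffH n0 unfolding dl_def by auto
    show "n \<noteq> 0" by (rule n0)
    show "\<bar>n\<bar> < int N" using st small unfolding dl_def by auto
  next
    show "trig_val N (c 0) a 0 = 1"
      unfolding trig keysum using m0 unfolding Q_def m_def by (simp add: card_cartesian_product power2_eq_square)
  next
    fix x show "trig_val N (c 0) a x \<ge> 0"
      unfolding trig keysum using posQ[of x] m0 by simp
  qed
  have "bdd_below {a0. \<exists>a :: int \<Rightarrow> real.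
      (\<forall>n. a n \<noteq> 0 \<longrightarrow> n \<in> H \<and> n \<noteq> 0 \<and> \<bar>n\<bar> < int N) \<and>
      trig_val N a0 a 0 = 1 \<and> (\<forall>x. trig_val N a0 a x \<ge> 0)}"
    by (rule bdd_belowI[of _ 0]) (use adm_nonneg N in blast)
  then have "vdc_T H N \<le> c 0" unfolding vdc_T_def by (rule cInf_lower[OF adm])
  then show ?thesis using c0 m_def by simp
qed

lemma dens_generic:
  fixes F :: "'a set" and phi :: "'a \<Rightarrow> int" and H :: "int set" and N :: nat
  assumes fin: "finite F" and ne: "F \<noteq> {}" and inj: "inj_on phi F" and N: "N \<ge> 1"
    and diffH: "\<forall>s\<in>F. \<forall>t\<in>F. phi s \<noteq> phi t \<longrightarrow> phi s - phi t \<in> H"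
    and small: "\<forall>s\<in>F. \<forall>t\<in>F. \<bar>phi s - phi t\<bar> < int N"
  shows "inter_density H N \<le> 3 / real (card F)"
proof -
  define X where "X = {A. A \<subseteq> {1..int N} \<and> (\<forall>a\<in>A. \<forall>a'\<in>A. a \<noteq> a' \<longrightarrow> a - a' \<notin> H)}"
  have finX: "finite X" unfolding X_def by (rule finite_subset[of _ "Pow {1..int N}"]) auto
  have neX: "{} \<in> X" unfolding X_def by auto
  obtain s0 where s0: "s0 \<in> F" using ne by auto
  have m0: "card F > 0" using fin ne by (simp add: card_gt_0_iff)
  have bound: "real (card A) / real N \<le> 3 / real (card F)" if AX: "A \<in> X" for A
  proof -
    have Asub: "A \<subseteq> {1..int N}" and Afree: "\<forall>a\<in>A. \<forall>a'\<in>A. a \<noteq> a' \<longrightarrow> a - a' \<notin> H"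
      using AX unfolding X_def by auto
    have finA: "finite A" using Asub finite_subset by blast
    define P where "P = phi ` F"
    have cardP: "card P = card F" unfolding P_def by (rule card_image[OF inj])
    have injf: "inj_on (\<lambda>(a,p). a + p) (A \<times> P)"
    proof (rule inj_onI, clarify)
      fix a p a' p' assume as: "a \<in> A" "p \<in> P" "a' \<in> A" "p' \<in> P" "a + p = a' + p'"
      show "a = a' \<and> p = p'"
      proof (cases "a = a'")
        case False
        from as obtain s t where st: "s \<in> F" "t \<in> F" "p = phi s" "p' = phi t" unfolding P_def by auto
        have "a - a' = phi t - phi s" using as st by simp
        moreover have "phi t \<noteq> phi s" using False \<open>a - a' = phi t - phi s\<close> by auto
        ultimately have "a - a' \<in> H" using diffH st by auto
        with Afree as False show ?thesis by auto
      qed (use as in auto)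
    qed
    have img: "(\<lambda>(a,p). a + p) ` (A \<times> P) \<subseteq> {1 + phi s0 - int N .. int N + phi s0 + int N}"
    proof clarify
      fix a p assume "a \<in> A" "p \<in> P"
      then obtain s where "s \<in> F" "p = phi s" "1 \<le> a" "a \<le> int N" using Asub unfolding P_def by auto
      moreover have "\<bar>phi s - phi s0\<bar> < int N" using small \<open>s \<in> F\<close> s0 by auto
      ultimately show "a + p \<in> {1 + phi s0 - int N .. int N + phi s0 + int N}" by auto
    qed
    have "card A * card F = card ((\<lambda>(a,p). a + p) ` (A \<times> P))"
      using card_image[OF injf] cardP by (simp add: card_cartesian_product)
    also have "\<dots> \<le> card {1 + phi s0 - int N .. int N + phi s0 + int N}"
      by (rule card_mono[OF _ img]) simp
    also have "\<dots> = 3 * N" by simp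
    finally have "real (card A) * real (card F) \<le> 3 * real N" by (metis of_nat_le_iff of_nat_mult of_nat_numeral)
    then show ?thesis using m0 N by (simp add: divide_simps mult.commute)
  qed
  have "inter_density H N = Max ((\<lambda>A. real (card A) / real N) ` X)" unfolding inter_density_def X_def by simp
  also have "\<dots> \<le> 3 / real (card F)"
    using finX neX bound by (subst Max_le_iff) auto
  finally show ?thesis .
qed


lemma phi_inj:
  fixes b :: nat and S :: "int set"
  assumes b: "b > 0" and res: "\<forall>s\<in>S. \<forall>s'\<in>S. s mod int b = s' mod int b \<longrightarrow> s = s'"
  shows "(\<forall>j<k. \<sigma> j \<in> S \<and> \<tau> j \<in> S) \<Longrightarrow> (\<Sum>j<k. \<sigma> j * int b ^ j) = (\<Sum>j<k. \<tau> j * int b ^ j)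
     \<Longrightarrow> \<forall>j<k. \<sigma> j = \<tau> j"
proof (induction k arbitrary: \<sigma> \<tau>)
  case 0 then show ?case by simp
next
  case (Suc k)
  have dec: "(\<Sum>j<Suc k. f j * int b ^ j) = f 0 + int b * (\<Sum>j<k. f (Suc j) * int b ^ j)" for f :: "nat \<Rightarrow> int"
    by (simp only: sum.lessThan_Suc_shift) (simp add: sum_distrib_left algebra_simps)
  from Suc.prems(2) have eq: "\<sigma> 0 + int b * (\<Sum>j<k. \<sigma> (Suc j) * int b ^ j) = \<tau> 0 + int b * (\<Sum>j<k. \<tau> (Suc j) * int b ^ j)"
    by (simp only: dec)
  then have "(\<sigma> 0 + int b * (\<Sum>j<k. \<sigma> (Suc j) * int b ^ j)) mod int b = (\<tau> 0 + int b * (\<Sum>j<k. \<tau> (Suc j) * int b ^ j)) mod int b"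
    by simp
  then have "\<sigma> 0 mod int b = \<tau> 0 mod int b" by simp
  moreover have "\<sigma> 0 \<in> S" "\<tau> 0 \<in> S" using Suc.prems(1) by auto
  ultimately have h0: "\<sigma> 0 = \<tau> 0" using res by blast
  with eq b have "(\<Sum>j<k. \<sigma> (Suc j) * int b ^ j) = (\<Sum>j<k. \<tau> (Suc j) * int b ^ j)" by simp
  then have "\<forall>j<k. \<sigma> (Suc j) = \<tau> (Suc j)"
  proof -
    have "\<forall>j<k. \<sigma> (Suc j) \<in> S \<and> \<tau> (Suc j) \<in> S" using Suc.prems(1) by simp
    then show ?thesis using Suc.IH[of "\<lambda>j. \<sigma> (Suc j)" "\<lambda>j. \<tau> (Suc j)"] \<open>(\<Sum>j<k. \<sigma> (Suc j) * int b ^ j) = (\<Sum>j<k. \<tau> (Suc j) * int b ^ j)\<close> by blast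
  qed
  with h0 show ?case by (auto simp: less_Suc_eq_0_disj)
qed

lemma geom_le:
  fixes b :: int assumes "b \<ge> 2" shows "(\<Sum>j<k. b ^ j) \<le> b ^ k"
proof (induction k)
  case (Suc k)
  have "b ^ k \<ge> 0" using assms by simp
  have "2 * b ^ k \<le> b * b ^ k" using assms \<open>b ^ k \<ge> 0\<close> by (intro mult_right_mono) auto
  with Suc show ?case by simp
qed simp

lemma phi_bound:
  fixes b :: nat and B :: int
  assumes "b \<ge> 2" "\<forall>j<k. \<bar>\<sigma> j\<bar> \<le> B" "B \<ge> 0"
  shows "\<bar>\<Sum>j<k. \<sigma> j * int b ^ j\<bar> \<le> B * int b ^ k"
proof -
  have "\<bar>\<Sum>j<k. \<sigma> j * int b ^ j\<bar> \<le> (\<Sum>j<k. \<bar>\<sigma> j * int b ^ j\<bar>)" by (rule sum_abs)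
  also have "\<dots> \<le> (\<Sum>j<k. B * int b ^ j)"
    using assms by (intro sum_mono) (simp add: abs_mult mult_right_mono)
  also have "\<dots> = B * (\<Sum>j<k. int b ^ j)" by (simp add: sum_distrib_left)
  also have "\<dots> \<le> B * int b ^ k"
  proof -
    have "B \<ge> 0" using assms by simp
    then show ?thesis using geom_le[of "int b" k] assms by (simp add: mult_left_mono)
  qed
  finally show ?thesis .
qed

theorem mainTheorem3:
  fixes b :: nat and R D S :: "int set"
  assumes "b \<ge> 3"
    and "complete_residue_system b R"
    and "D \<subseteq> R" and "2 \<le> card D" and "card D < b"
    and "S \<subseteq> R" and "card S > 1"
    and "{s - s' | s s'. s \<in> S \<and> s' \<in> S} \<subseteq> D"
  shows "\<exists>K > 0. \<forall>N \<ge> 1.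
           vdc_T (digit_set b D) N \<le> K * real N powr (- (ln (real (card S)) / ln (real b))) \<and>
           inter_density (digit_set b D) N \<le> K * real N powr (- (ln (real (card S)) / ln (real b)))"
proof -
  have b0: "b > 0" "b \<ge> 2" using assms(1) by auto
  have finR: "finite R" and cardR: "card R = b" and imR: "(\<lambda>x. x mod int b) ` R = {0..<int b}"
    using assms(2) unfolding complete_residue_system_def by auto
  have "inj_on (\<lambda>x. x mod int b) R"
    by (rule eq_card_imp_inj_on[OF finR]) (simp add: imR cardR)
  then have res: "\<forall>s\<in>S. \<forall>s'\<in>S. s mod int b = s' mod int b \<longrightarrow> s = s'"
    using assms(6) by (auto simp: inj_on_def)
  have finS: "finite S" using finR assms(6) finite_subset by blast
  have neS: "S \<noteq> {}" using assms(7) by auto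
  define B :: int where "B = (\<Sum>s\<in>S. \<bar>s\<bar>) + 1"
  have Bs: "\<bar>s\<bar> \<le> B" if "s \<in> S" for s
  proof -
    have "\<bar>s\<bar> \<le> (\<Sum>s\<in>S. \<bar>s\<bar>)" by (rule member_le_sum[OF that]) (auto simp: finS)
    then show ?thesis unfolding B_def by simp
  qed
  have B1: "B \<ge> 1" unfolding B_def by (simp add: sum_nonneg)
  define c where "c = ln (real (card S)) / ln (real b)"
  have x1: "real (card S) > 1" using assms(7) by simp
  have bb: "real b > 1" using b0 by simp
  have c0: "c > 0" unfolding c_def using x1 bb by simp
  have bpow: "real b powr c = real (card S)"
    unfolding c_def powr_def using x1 bb by simp
  define K where "K = 3 * (2 * real_of_int B * real b) powr c"
  have K0: "K > 0" unfolding K_def using B1 b0 by simp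
  have main: "vdc_T (digit_set b D) N \<le> K * real N powr (- c) \<and>
           inter_density (digit_set b D) N \<le> K * real N powr (- c)" if N: "N \<ge> 1" for N :: nat
  proof -
    have "\<exists>k. int N \<le> 2 * B * int b ^ Suc k"
    proof -
      have n1: "N < 2 ^ N" by (rule less_exp)
      have n2: "(2::nat) ^ N \<le> b ^ N" using b0 by (intro power_mono) auto
      have n3: "b ^ N \<le> b ^ Suc N" using b0 by (intro power_increasing) auto
      from n1 n2 n3 have "N \<le> b ^ Suc N" by linarith
      then have i1: "int N \<le> int b ^ Suc N" by (metis of_nat_le_iff of_nat_power)
      have "int b ^ Suc N \<ge> 0" by simp
      then have "1 * int b ^ Suc N \<le> (2 * B) * int b ^ Suc N" using B1 by (intro mult_right_mono) auto
      then have "int N \<le> 2 * B * int b ^ Suc N" using i1 by linarith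
      then show ?thesis by blast
    qed
    define k where "k = (LEAST k. int N \<le> 2 * B * int b ^ Suc k)"
    have kN: "int N \<le> 2 * B * int b ^ Suc k"
      unfolding k_def using \<open>\<exists>k. _\<close> by (rule LeastI_ex)
    have ksmall: "k = 0 \<or> 2 * B * int b ^ k < int N"
    proof (cases k)
      case (Suc k')
      then have "k' < k" by simp
      then have "\<not> int N \<le> 2 * B * int b ^ Suc k'"
        unfolding k_def by (rule not_less_Least)
      then show ?thesis using Suc by simp
    qed simp
    define F where "F = PiE {..<k} (\<lambda>_. S)"
    define phi where "phi \<sigma> = (\<Sum>j<k. \<sigma> j * int b ^ j)" for \<sigma>
    have finF: "finite F" unfolding F_def using finS by (simp add: finite_PiE)
    have neF: "F \<noteq> {}" unfolding F_def using neS by (simp add: PiE_eq_empty_iff)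
    have cardF: "card F = card S ^ k" unfolding F_def using finS by (simp add: card_PiE)
    have injF: "inj_on phi F"
    proof (rule inj_onI)
      fix \<sigma> \<tau> assume st: "\<sigma> \<in> F" "\<tau> \<in> F" "phi \<sigma> = phi \<tau>"
      have mem: "\<forall>j<k. \<sigma> j \<in> S \<and> \<tau> j \<in> S" using st(1,2) unfolding F_def by (meson PiE_mem lessThan_iff)
      have "\<forall>j<k. \<sigma> j = \<tau> j"
        by (rule phi_inj[OF b0(1) res mem]) (use st(3) in \<open>simp add: phi_def\<close>)
      then show "\<sigma> = \<tau>" using st(1,2) unfolding F_def by (intro PiE_ext) auto
    qed
    have diffH: "\<forall>s\<in>F. \<forall>t\<in>F. phi s \<noteq> phi t \<longrightarrow> phi s - phi t \<in> digit_set b D"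
    proof (intro ballI impI)
      fix s t assume st: "s \<in> F" "t \<in> F" "phi s \<noteq> phi t"
      show "phi s - phi t \<in> digit_set b D"
      proof (cases k)
        case 0 then show ?thesis using st unfolding phi_def by simp
      next
        case (Suc k')
        have "phi s - phi t = (\<Sum>j\<le>k'. (s j - t j) * int b ^ j)"
          unfolding phi_def Suc lessThan_Suc_atMost by (simp add: sum_subtractf algebra_simps)
        moreover have "\<forall>j\<le>k'. s j - t j \<in> D"
        proof (intro allI impI)
          fix j assume "j \<le> k'"
          then have jk: "j \<in> {..<k}" using Suc by simp
          have "s j \<in> S" by (rule PiE_mem[OF st(1)[unfolded F_def] jk])
          moreover have "t j \<in> S" by (rule PiE_mem[OF st(2)[unfolded F_def] jk])
          ultimately show "s j - t j \<in> D" using assms(8) by blast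
        qed
        ultimately have "phi s - phi t = (\<Sum>j\<le>k'. (\<lambda>j. s j - t j) j * int b ^ j) \<and> (\<forall>j\<le>k'. (\<lambda>j. s j - t j) j \<in> D)"
          by simp
        then show ?thesis unfolding digit_set_def
          by (intro CollectI exI[of _ k'] exI[of _ "\<lambda>j. s j - t j"])
      qed
    qed
    have small: "\<forall>s\<in>F. \<forall>t\<in>F. \<bar>phi s - phi t\<bar> < int N"
    proof (intro ballI)
      fix s t assume st: "s \<in> F" "t \<in> F"
      show "\<bar>phi s - phi t\<bar> < int N"
      proof (cases "k = 0")
        case True then show ?thesis using N unfolding phi_def by simp
      next
        case False
        with ksmall have lt: "2 * B * int b ^ k < int N" by simp
        have ms: "\<forall>j<k. \<bar>s j\<bar> \<le> B" "\<forall>j<k. \<bar>t j\<bar> \<le> B"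
          using st Bs unfolding F_def by (meson PiE_mem lessThan_iff)+
        have "\<bar>phi s\<bar> \<le> B * int b ^ k" "\<bar>phi t\<bar> \<le> B * int b ^ k"
          unfolding phi_def using b0(2) B1 ms by (auto intro!: phi_bound)
        with lt show ?thesis by simp
      qed
    qed
    have v: "vdc_T (digit_set b D) N \<le> 1 / real (card F)"
      by (rule vdc_generic[OF finF neF injF N diffH small])
    have d: "inter_density (digit_set b D) N \<le> 3 / real (card F)"
      by (rule dens_generic[OF finF neF injF N diffH small])
    have final: "3 / real (card F) \<le> K * real N powr (- c)"
    proof -
      have xk: "real (card F) = (real b ^ k) powr c"
        using bb by (simp add: cardF powr_realpow[symmetric] powr_powr bpow[symmetric] mult.commute)
      have "real N \<le> 2 * real_of_int B * real b * real b ^ k"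
      proof -
        have "real_of_int (int N) \<le> real_of_int (2 * B * int b ^ Suc k)" using kN by linarith
        then show ?thesis by simp
      qed
      then have "real N powr c \<le> (2 * real_of_int B * real b * real b ^ k) powr c"
        using c0 by (intro powr_mono2) auto
      also have "\<dots> = (2 * real_of_int B * real b) powr c * real (card F)"
        using B1 bb xk by (simp add: powr_mult)
      finally have h: "real N powr c \<le> (2 * real_of_int B * real b) powr c * real (card F)" .
      have Np: "real N powr c > 0" using N by simp
      have Fp: "real (card F) > 0" using finF neF by (simp add: card_gt_0_iff)
      have "3 / real (card F) \<le> K / real N powr c"
        unfolding K_def using h Np Fp by (simp add: divide_simps)
      then show ?thesis by (simp add: powr_minus divide_inverse)
    qed
    have "1 / real (card F) \<le> 3 / real (card F)" by (simp add: divide_right_mono)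
    have 1: "vdc_T (digit_set b D) N \<le> K * real N powr (- c)"
      using v final \<open>1 / real (card F) \<le> 3 / real (card F)\<close> by linarith
    have 2: "inter_density (digit_set b D) N \<le> K * real N powr (- c)"
      using d final by linarith
    show ?thesis using 1 2 by blast
  qed
  show ?thesis using K0 main unfolding c_def by blast
qed
end
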